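(* For every $n\ge1$ and $s\ge 2$, the homomorphism $\nu_n^s:A_n^s\to A_{n+1}^s$ is injective.
   Context: For $s\ge1$, $A_n^s$ is the group of path components of the space of homotopy self-equivalences of a connected graph $G\simeq\bigvee^nS^1$ fixing $s$ chosen distinct marked points $x_1,\dots,x_s$ pointwise; $A_n^s\cong\mathrm{Aut}(F_n)\ltimes F_n^{\times(s-1)}$ with $\mathrm{Aut}(F_n)$ acting diagonally. The homomorphism $\alpha_n^s:A_n^s\to A_{n+1}^{s-1}$ (for $s\ge2$) is induced by connecting the last marked point $x_s$ to the first marked point $x_1$ by a new edge (which raises the rank to $n+1 $ and leaves $s-1$ marked points), extending self-equivalences by the identity on the new edge. The homomorphism $\mu_{n}^{s}:A_{n}^{s}\to A_{n}^{s+1}$ is induced by attaching a new edge (leg) at a marked point, with its free endpoint as a new marked point, extending by the identity on the leg; under $A_n^s\cong\mathrm{Aut}(F_n)\ltimes F_n^{\times(s-1)}$ it is the standard inclusion $\mathrm{Aut}(F_n)\ltimes F_n^{\times(s-1)}\hookrightarrow\mathrm{Aut}(F_n)\ltimes F_n^{\times s}$. Finally $\nu_n^s:=\mu_{n+1}^{s-1}\circ\alpha_n^s$. *)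

theory Defs
  imports "HOL-Algebra.Group"
begin

text \<open>A letter (i, True) is the generator x_i, (i, False) its inverse.\<close>
type_synonym letter = "nat \<times> bool"
type_synonym word = "letter list"

fun red :: "word \<Rightarrow> word" where
  "red [] = []"
| "red (x # xs) = (case red xs of
      [] \<Rightarrow> [x]
    | y # ys \<Rightarrow> (if fst x = fst y \<and> snd x \<noteq> snd y then ys else x # y # ys))"

definition reduced :: "word \<Rightarrow> bool" where
  "reduced w \<longleftrightarrow> (\<forall>i. Suc i < length w \<longrightarrow>
      \<not> (fst (w ! i) = fst (w ! Suc i) \<and> snd (w ! i) \<noteq> snd (w ! Suc i)))"

definition invw :: "word \<Rightarrow> word" where
  "invw w = rev (map (\<lambda>(i, b). (i, \<not> b)) w)"

definition FG :: "nat \<Rightarrow> word monoid" where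
  "FG n = \<lparr> carrier = {w. reduced w \<and> (\<forall>l \<in> set w. fst l < n)},
            mult = (\<lambda>u v. red (u @ v)),
            one = [] \<rparr>"

definition AutF :: "nat \<Rightarrow> (word \<Rightarrow> word) set" where
  "AutF n = {\<phi>. \<phi> \<in> hom (FG n) (FG n) \<and> bij_betw \<phi> (carrier (FG n)) (carrier (FG n))
                 \<and> \<phi> \<in> extensional (carrier (FG n))}"

text \<open>An element is (phi, [w_2, ..., w_s]); geometrically w_i = gamma_i f(gamma_i)^(-1),
  which gives the product (phi, w)(psi, v) = (phi o psi, w_i phi(v_i)).\<close>
definition A :: "nat \<Rightarrow> nat \<Rightarrow> ((word \<Rightarrow> word) \<times> word list) monoid" where
  "A n s = \<lparr> carrier = {(\<phi>, ws). \<phi> \<in> AutF n \<and> length ws = s - 1 \<and> set ws \<subseteq> carrier (FG n)},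
             mult = (\<lambda>(\<phi>, ws) (\<psi>, vs).
                       (restrict (\<phi> \<circ> \<psi>) (carrier (FG n)),
                        map2 (\<lambda>w v. red (w @ \<phi> v)) ws vs)),
             one = (restrict id (carrier (FG n)), replicate (s - 1) []) \<rparr>"

definition subst_hom :: "(nat \<Rightarrow> word) \<Rightarrow> word \<Rightarrow> word" where
  "subst_hom g w = red (concat (map (\<lambda>(i, b). if b then g i else invw (g i)) w))"

text \<open>alpha_n^s: the new edge e from x_s to x_1 gives the new generator t = x_n
  (the loop gamma_s e), with Phi(t) = w_s^(-1) t; the other marked data are kept.\<close>
definition alpha :: "nat \<Rightarrow> nat \<Rightarrow> ((word \<Rightarrow> word) \<times> word list) \<Rightarrow> ((word \<Rightarrow> word) \<times> word list)" where
  "alpha n s = (\<lambda>(\<phi>, ws).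
     (restrict (subst_hom (\<lambda>i. if i < n then \<phi> [(i, True)] else red (invw (last ws) @ [(n, True)])))
               (carrier (FG (Suc n))),
      butlast ws))"

definition mu :: "nat \<Rightarrow> nat \<Rightarrow> ((word \<Rightarrow> word) \<times> word list) \<Rightarrow> ((word \<Rightarrow> word) \<times> word list)" where
  "mu n s = (\<lambda>(\<phi>, ws). (\<phi>, ws @ [[]]))"

definition nu :: "nat \<Rightarrow> nat \<Rightarrow> ((word \<Rightarrow> word) \<times> word list) \<Rightarrow> ((word \<Rightarrow> word) \<times> word list)" where
  "nu n s = mu (Suc n) (s - 1) \<circ> alpha n s"

end

theory Submission
  imports Defs
begin

definition canc :: "letter \<Rightarrow> letter \<Rightarrow> bool" where
  "canc x y \<longleftrightarrow> fst x = fst y \<and> snd x \<noteq> snd y"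

definition stp :: "letter \<Rightarrow> word \<Rightarrow> word" where
  "stp x r = (case r of [] \<Rightarrow> [x] | y # ys \<Rightarrow> (if canc x y then ys else x # y # ys))"

lemma red_Cons': "red (x # xs) = stp x (red xs)"
  by (simp add: stp_def canc_def split: list.split)

declare red.simps(2)[simp del]

lemma reduced_Nil[simp]: "reduced []" by (simp add: reduced_def)

lemma reduced_Cons: "reduced (x # xs) \<longleftrightarrow> reduced xs \<and> (xs = [] \<or> \<not> canc x (hd xs))"
proof
  assume r: "reduced (x # xs)"
  have "reduced xs" unfolding reduced_def
  proof (intro allI impI)
    fix i assume "Suc i < length xs"
    then show "\<not> (fst (xs ! i) = fst (xs ! Suc i) \<and> snd (xs ! i) \<noteq> snd (xs ! Suc i))"
      using r[unfolded reduced_def, rule_format, of "Suc i"] by simp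
  qed
  moreover have "xs = [] \<or> \<not> canc x (hd xs)"
    using r[unfolded reduced_def, rule_format, of 0] by (cases xs) (auto simp: canc_def)
  ultimately show "reduced xs \<and> (xs = [] \<or> \<not> canc x (hd xs))" by blast
next
  assume h: "reduced xs \<and> (xs = [] \<or> \<not> canc x (hd xs))"
  show "reduced (x # xs)" unfolding reduced_def
  proof (intro allI impI)
    fix i assume i: "Suc i < length (x # xs)"
    show "\<not> (fst ((x#xs) ! i) = fst ((x#xs) ! Suc i) \<and> snd ((x#xs) ! i) \<noteq> snd ((x#xs) ! Suc i))"
    proof (cases i)
      case 0 then show ?thesis using h i by (cases xs) (auto simp: canc_def)
    next
      case (Suc j) then show ?thesis using h i unfolding reduced_def by auto
    qed
  qed
qed

lemma reduced_stp: "reduced r \<Longrightarrow> reduced (stp x r)"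
  by (cases r) (auto simp: stp_def reduced_Cons)

lemma red_reduced: "reduced (red w)"
  by (induction w) (auto simp: red_Cons' reduced_stp)

lemma red_id: "reduced w \<Longrightarrow> red w = w"
proof (induction w)
  case Nil then show ?case by simp
next
  case (Cons x xs)
  then have "red xs = xs" by (simp add: reduced_Cons)
  then show ?case using Cons.prems by (cases xs) (auto simp: red_Cons' stp_def reduced_Cons)
qed

lemma set_stp: "set (stp x r) \<subseteq> insert x (set r)"
  by (cases r) (auto simp: stp_def)

lemma set_red: "set (red w) \<subseteq> set w"
proof (induction w)
  case (Cons x xs) then show ?case using set_stp[of x "red xs"] by (auto simp: red_Cons')
qed simp

lemma stp_cancel: "reduced z \<Longrightarrow> canc x y \<Longrightarrow> stp x (stp y z) = z"
proof (cases z)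
  case Nil
  assume "canc x y" then show ?thesis using Nil by (simp add: stp_def canc_def)
next
  case (Cons a zs)
  assume r: "reduced z" and c: "canc x y"
  show ?thesis
  proof (cases "canc y a")
    case True
    then have "a = x" using c by (cases a; cases x; cases y) (auto simp: canc_def)
    then show ?thesis using r Cons True
      by (cases zs) (auto simp: stp_def reduced_Cons)
  next
    case False then show ?thesis using Cons c by (simp add: stp_def)
  qed
qed

lemma red_append_red: "red (xs @ red ys) = red (xs @ ys)"
  by (induction xs) (auto simp: red_Cons' red_id red_reduced)

lemma red_stp_append: "reduced v \<Longrightarrow> red (stp x v @ r) = stp x (red (v @ r))"
proof (cases v)
  case Nil then show ?thesis by (simp add: stp_def red_Cons')
next
  case (Cons y ys)
  assume rv: "reduced v"
  show ?thesis
  proof (cases "canc x y")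
    case True
    have "stp x (red (v @ r)) = stp x (stp y (red (ys @ r)))" using Cons by (simp add: red_Cons')
    also have "\<dots> = red (ys @ r)" using stp_cancel[OF red_reduced True] by simp
    finally show ?thesis using Cons True by (simp add: stp_def)
  next
    case False
    then show ?thesis using Cons by (simp add: stp_def red_Cons')
  qed
qed

lemma red_red_append: "red (red xs @ ys) = red (xs @ ys)"
proof (induction xs)
  case (Cons x xs)
  have "red (red (x # xs) @ ys) = red (stp x (red xs) @ ys)" by (simp add: red_Cons')
  also have "\<dots> = stp x (red (red xs @ ys))" using red_stp_append[OF red_reduced] by simp
  also have "\<dots> = red ((x # xs) @ ys)" using Cons by (simp add: red_Cons')
  finally show ?case .
qed simp

lemma invw_Cons: "invw (x # xs) = invw xs @ [(fst x, \<not> snd x)]"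
  by (cases x) (simp add: invw_def)

lemma invw_invw[simp]: "invw (invw w) = w"
  by (induction w) (auto simp: invw_def rev_map)

lemma red_inv_left: "red (invw w @ w) = []"
proof (induction w)
  case (Cons x w)
  have c: "canc (fst x, \<not> snd x) x" by (simp add: canc_def)
  have "red (invw (x # w) @ x # w) = red (invw w @ red ((fst x, \<not> snd x) # x # w))"
    by (simp add: invw_Cons red_append_red)
  also have "red ((fst x, \<not> snd x) # x # w) = red w"
    using stp_cancel[OF red_reduced c] by (simp add: red_Cons')
  finally show ?case using Cons by (simp add: red_append_red)
qed (simp add: invw_def)

lemma red_inv_right: "red (w @ invw w) = []"
  using red_inv_left[of "invw w"] by simp

lemma set_invw: "set (invw w) = (\<lambda>(i, b). (i, \<not> b)) ` set w"
  by (simp add: invw_def)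

lemma reduced_snoc: "reduced (xs @ [z]) \<longleftrightarrow> reduced xs \<and> (xs = [] \<or> \<not> canc (last xs) z)"
proof (induction xs)
  case (Cons x xs)
  then show ?case by (cases xs) (auto simp: reduced_Cons)
qed (simp add: reduced_Cons)

lemma reduced_invw: "reduced w \<Longrightarrow> reduced (invw w)"
proof (induction w)
  case (Cons x xs)
  then have "reduced xs" by (simp add: reduced_Cons)
  moreover have "xs \<noteq> [] \<Longrightarrow> \<not> canc (last (invw xs)) (fst x, \<not> snd x)"
    using Cons.prems by (cases xs) (auto simp: reduced_Cons invw_Cons canc_def)
  moreover have "invw xs = [] \<longleftrightarrow> xs = []" by (simp add: invw_def)
  ultimately show ?case using Cons.IH unfolding invw_Cons reduced_snoc by blast
qed (simp add: invw_def)

lemma FG_group: "group (FG n)"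
proof (rule groupI)
  fix x y assume "x \<in> carrier (FG n)" "y \<in> carrier (FG n)"
  then show "x \<otimes>\<^bsub>FG n\<^esub> y \<in> carrier (FG n)"
    using set_red[of "x @ y"] by (auto simp: FG_def red_reduced)
next
  show "\<one>\<^bsub>FG n\<^esub> \<in> carrier (FG n)" by (simp add: FG_def)
next
  fix x y z assume "x \<in> carrier (FG n)" "y \<in> carrier (FG n)" "z \<in> carrier (FG n)"
  show "x \<otimes>\<^bsub>FG n\<^esub> y \<otimes>\<^bsub>FG n\<^esub> z = x \<otimes>\<^bsub>FG n\<^esub> (y \<otimes>\<^bsub>FG n\<^esub> z)"
    by (simp add: FG_def red_red_append red_append_red)
next
  fix x assume "x \<in> carrier (FG n)"
  then show "\<one>\<^bsub>FG n\<^esub> \<otimes>\<^bsub>FG n\<^esub> x = x" by (simp add: FG_def red_id)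
next
  fix x assume x: "x \<in> carrier (FG n)"
  show "\<exists>y\<in>carrier (FG n). y \<otimes>\<^bsub>FG n\<^esub> x = \<one>\<^bsub>FG n\<^esub>"
  proof (intro bexI)
    show "invw x \<otimes>\<^bsub>FG n\<^esub> x = \<one>\<^bsub>FG n\<^esub>" by (simp add: FG_def red_inv_left)
    show "invw x \<in> carrier (FG n)" using x by (auto simp: FG_def reduced_invw set_invw)
  qed
qed

lemma aut_eq:
  assumes p: "\<phi> \<in> AutF n" and q: "\<psi> \<in> AutF n"
    and gen: "\<And>i. i < n \<Longrightarrow> \<phi> [(i, True)] = \<psi> [(i, True)]"
  shows "\<phi> = \<psi>"
proof -
  interpret G: group "FG n" by (rule FG_group)
  interpret P: group_hom "FG n" "FG n" \<phi>
    using p by (simp add: AutF_def group_hom_def group_hom_axioms_def FG_group)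
  interpret Q: group_hom "FG n" "FG n" \<psi>
    using q by (simp add: AutF_def group_hom_def group_hom_axioms_def FG_group)
  have letter: "\<phi> [x] = \<psi> [x]" if "fst x < n" for x
  proof (cases "snd x")
    case True then show ?thesis using gen[OF that] by (cases x) auto
  next
    case False
    define i where "i = fst x"
    have xi: "x = (i, False)" "i < n" using False that unfolding i_def by (cases x, simp)+
    have gi: "[(i, True)] \<in> carrier (FG n)" using xi by (simp add: FG_def reduced_def)
    have "inv\<^bsub>FG n\<^esub> [(i, True)] = [(i, False)]"
      by (rule G.inv_equality) (use gi xi in \<open>auto simp: FG_def reduced_def red.simps\<close>)
    then have "[x] = inv\<^bsub>FG n\<^esub> [(i, True)]" using xi by simp
    then show ?thesis using P.hom_inv[OF gi] Q.hom_inv[OF gi] gen[OF xi(2)] by simp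
  qed
  have all: "w \<in> carrier (FG n) \<longrightarrow> \<phi> w = \<psi> w" for w
  proof (induction w)
    case Nil
    show ?case using P.hom_one Q.hom_one by (simp add: FG_def)
  next
    case (Cons x w)
    show ?case
    proof
      assume xw: "x # w \<in> carrier (FG n)"
      then have wc: "w \<in> carrier (FG n)" and xc: "[x] \<in> carrier (FG n)" and xn: "fst x < n"
        by (auto simp: FG_def reduced_Cons reduced_def)
      have "x # w = [x] \<otimes>\<^bsub>FG n\<^esub> w" using xw by (simp add: FG_def red_id)
      then show "\<phi> (x # w) = \<psi> (x # w)"
        using P.hom_mult[OF xc wc] Q.hom_mult[OF xc wc] letter[OF xn] Cons.IH wc by simp
    qed
  qed
  show ?thesis
  proof
    fix w show "\<phi> w = \<psi> w"
      using all[of w] p q by (cases "w \<in> carrier (FG n)") (auto simp: AutF_def extensional_def)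
  qed
qed

lemma aut_red: "\<phi> \<in> AutF n \<Longrightarrow> w \<in> carrier (FG n) \<Longrightarrow> red (\<phi> w) = \<phi> w"
  unfolding AutF_def by (auto intro!: red_id dest!: bij_betw_imp_funcset simp: FG_def Pi_def)

lemma invw_snoc_reduced:
  assumes "w \<in> carrier (FG n)" shows "reduced (invw w @ [(n, True)])"
proof -
  have "reduced (invw w)" using assms by (simp add: FG_def reduced_invw)
  moreover have "invw w \<noteq> [] \<Longrightarrow> fst (last (invw w)) < n"
    using assms last_in_set[of "invw w"] by (auto simp: FG_def set_invw)
  ultimately show ?thesis by (auto simp: reduced_snoc canc_def)
qed

theorem mainTheorem8:
  fixes n s :: nat
  assumes "n \<ge> 1" and "s \<ge> 2"
  shows "inj_on (nu n s) (carrier (A n s))"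
proof (rule inj_onI)
  fix a b assume a: "a \<in> carrier (A n s)" and b: "b \<in> carrier (A n s)" and e: "nu n s a = nu n s b"
  obtain \<phi> ws where aa: "a = (\<phi>, ws)" by (cases a)
  obtain \<psi> vs where bb: "b = (\<psi>, vs)" by (cases b)
  have p: "\<phi> \<in> AutF n" and lw: "length ws = s - 1" and sw: "set ws \<subseteq> carrier (FG n)"
    using a aa by (auto simp: A_def)
  have q: "\<psi> \<in> AutF n" and lv: "length vs = s - 1" and sv: "set vs \<subseteq> carrier (FG n)"
    using b bb by (auto simp: A_def)
  let ?g = "\<lambda>\<phi> ws i. if i < n then \<phi> [(i, True)] else red (invw (last ws) @ [(n, True)])"
  have e1: "restrict (subst_hom (?g \<phi> ws)) (carrier (FG (Suc n)))
          = restrict (subst_hom (?g \<psi> vs)) (carrier (FG (Suc n)))"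
    and e2: "butlast ws = butlast vs"
    using e aa bb by (auto simp: nu_def mu_def alpha_def)
  have sh: "subst_hom g [(i, True)] = red (g i)" for g i by (simp add: subst_hom_def)
  have ev: "subst_hom (?g \<phi> ws) [(i, True)] = subst_hom (?g \<psi> vs) [(i, True)]" if "i \<le> n" for i
  proof -
    have "[(i, True)] \<in> carrier (FG (Suc n))" using that by (simp add: FG_def reduced_def)
    then show ?thesis using fun_cong[OF e1, of "[(i, True)]"] by simp
  qed
  have gc: "[(i, True)] \<in> carrier (FG n)" if "i < n" for i using that by (simp add: FG_def reduced_def)
  have "\<phi> = \<psi>"
  proof (rule aut_eq[OF p q])
    fix i assume i: "i < n"
    show "\<phi> [(i, True)] = \<psi> [(i, True)]"
      using ev[of i] i aut_red[OF p gc[OF i]] aut_red[OF q gc[OF i]] by (simp add: sh)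
  qed
  moreover have "ws \<noteq> []" "vs \<noteq> []" using lw lv assms by auto
  moreover have "last ws = last vs"
  proof -
    have lc: "last ws \<in> carrier (FG n)" "last vs \<in> carrier (FG n)"
      using \<open>ws \<noteq> []\<close> \<open>vs \<noteq> []\<close> sw sv by auto
    have "invw (last ws) @ [(n, True)] = invw (last vs) @ [(n, True)]"
      using ev[of n] red_id[OF invw_snoc_reduced[OF lc(1)]] red_id[OF invw_snoc_reduced[OF lc(2)]]
      by (simp add: sh)
    then have "invw (invw (last ws)) = invw (invw (last vs))" by simp
    then show ?thesis by simp
  qed
  ultimately have "ws = vs" using e2 by (metis append_butlast_last_id)
  then show "a = b" using aa bb \<open>\<phi> = \<psi>\<close> by simp
qed

end
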